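(* For all positive integers $k$ and $\ell$ there exists a positive integer $n$ such that (a) $s(nk)=\ell k$, and (b) $n\le \dfrac{2^{\ell k+n_k}-2^{\mu_2(k)}}{k}$.
   Context: $s(m)$ denotes the sum of the binary digits of the positive integer $m$. For a positive integer $k$, $n_k=\lceil \log_2 k\rceil$ (the smallest nonnegative integer $n$ with $k\le 2^n$), and $\mu_2(k)$ is the exponent of $2$ in $k$, i.e. the largest $\alpha\ge 0$ with $2^\alpha\mid k$. *)

theory Defs
  imports Complex_Main "HOL-Computational_Algebra.Primes"
begin

fun bsum :: "nat \<Rightarrow> nat" where
  "bsum m = (if m = 0 then 0 else m mod 2 + bsum (m div 2))"

definition nk :: "nat \<Rightarrow> nat" where
  "nk k = (LEAST n. k \<le> 2 ^ n)"

definition mu2 :: "nat \<Rightarrow> nat" where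
  "mu2 k = multiplicity (2::nat) k"

end

theory Submission
  imports Defs
begin

declare bsum.simps[simp del]

lemma bsum_rec: "bsum m = m mod 2 + bsum (m div 2)"
  by (cases "m = 0") (simp_all add: bsum.simps[of m] bsum.simps[of 0])

lemma bsum_split: "b < 2 ^ r \<Longrightarrow> bsum (a * 2 ^ r + b) = bsum a + bsum b"
proof (induction r arbitrary: b)
  case 0
  then show ?case by (simp add: bsum.simps[of 0])
next
  case (Suc r)
  have m: "(a * 2 ^ Suc r + b) mod 2 = b mod 2" proof - have "a * 2 ^ Suc r + b = b + 2 * (a * 2 ^ r)" by simp then show ?thesis by (simp only: mod_mult_self2) qed
  have d: "(a * 2 ^ Suc r + b) div 2 = a * 2 ^ r + b div 2" by simp
  have "b div 2 < 2 ^ r" using Suc.prems by simp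
  then have "bsum (a * 2 ^ r + b div 2) = bsum a + bsum (b div 2)" using Suc.IH by blast
  then show ?case using bsum_rec[of "a * 2 ^ Suc r + b"] bsum_rec[of b] m d by simp
qed

lemma bsum_compl: "c < 2 ^ r \<Longrightarrow> bsum c + bsum (2 ^ r - 1 - c) = r"
proof (induction r arbitrary: c)
  case 0
  then show ?case by (simp add: bsum.simps[of 0])
next
  case (Suc r)
  have h: "c div 2 < 2 ^ r" using Suc.prems by simp
  have m: "(2 ^ Suc r - 1 - c) mod 2 = 1 - c mod 2" using Suc.prems by (simp add: mod2_eq_if)
  have d: "(2 ^ Suc r - 1 - c) div 2 = 2 ^ r - 1 - c div 2" using Suc.prems by simp
  show ?case using bsum_rec[of c] bsum_rec[of "2 ^ Suc r - 1 - c"] m d Suc.IH[OF h]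
    by (simp add: mod2_eq_if)
qed

lemma bsum_mult: assumes "0 < k" "k \<le> 2 ^ L" shows "bsum (k * (2 ^ L - 1)) = L"
proof -
  have e: "k * (2 ^ L - 1) = (k - 1) * 2 ^ L + (2 ^ L - 1 - (k - 1))"
    using assms by (simp add: algebra_simps diff_mult_distrib)
  have "k - 1 < 2 ^ L" using assms by simp
  then show ?thesis using e bsum_split[of "2 ^ L - 1 - (k - 1)" L "k - 1"] bsum_compl[of "k - 1" L]
    by simp
qed

theorem mainTheorem2:
  fixes k l :: nat
  assumes "k > 0" and "l > 0"
  shows "\<exists>n::nat. n > 0 \<and> bsum (n * k) = l * k \<and>
           real n \<le> ((2::real) ^ (l * k + nk k) - 2 ^ mu2 k) / real k"
proof -
  define L where "L = l * k"
  have L1: "L \<ge> 1" using assms by (simp add: L_def)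
  have kL: "k \<le> 2 ^ L"
  proof -
    have "k \<le> L" using assms by (simp add: L_def)
    also have "L < 2 ^ L" by simp
    finally show ?thesis by simp
  qed
  have knk: "k \<le> 2 ^ nk k" unfolding nk_def
    by (rule LeastI[of "\<lambda>n. k \<le> 2 ^ n" k]) simp
  have amu: "2 ^ mu2 k \<le> k" unfolding mu2_def
    using multiplicity_dvd[of 2 k] assms by (simp add: dvd_imp_le)
  define n where "n = (2::nat) ^ L - 1"
  have npos: "n > 0" using L1 one_less_power[of "2::nat" L] by (simp add: n_def)
  have bs: "bsum (n * k) = l * k" using bsum_mult[OF assms(1) kL] by (simp add: n_def L_def mult.commute)

  have nr: "real n = 2 ^ L - 1" by (simp add: n_def of_nat_diff)
  have "real n * real k \<le> 2 ^ (L + nk k) - 2 ^ mu2 k"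
  proof -
    have "real k \<le> 2 ^ nk k" using knk by (metis of_nat_le_iff of_nat_numeral of_nat_power)
    then have "2 ^ L * real k \<le> 2 ^ L * 2 ^ nk k" by simp
    moreover have "(2::real) ^ mu2 k \<le> real k" using amu by (metis of_nat_le_iff of_nat_numeral of_nat_power)
    ultimately have "2 ^ L * real k - real k \<le> 2 ^ L * 2 ^ nk k - 2 ^ mu2 k" by linarith
    then show ?thesis by (simp add: nr power_add algebra_simps)
  qed
  then have "real n \<le> (2 ^ (L + nk k) - 2 ^ mu2 k) / real k"
    using assms by (simp add: pos_le_divide_eq)
  then show ?thesis using npos bs by (auto simp: L_def)
qed

end
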